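(* Let $\sigma\in\mathbb{C}$ with $\operatorname{Re}\sigma>0$, let $\sqrt\sigma$ be the principal square root, ${\bf L}={\bf I}+(\sigma-1){\bf A}$, $c=\sqrt\sigma$, and $u=(\sqrt\sigma-1)/(\sqrt\sigma+1)$. Then ${\bf L}+c{\bf I}$ is invertible, $|u|<1$, and ${\bf K}=({\bf L}-c{\bf I})({\bf L}+c{\bf I})^{-1}$ satisfies $\|{\bf K}\|\le|u|$. Consequently, with $\Upsilon={\bf I}-2\Gamma$, $\|\Upsilon{\bf K}\|\le|u|$ and $$[-c{\bf I}+\Gamma({\bf L}+c{\bf I})]^{-1}=-2({\bf L}+c{\bf I})^{-1}\sum_{n=0}^\infty(\Upsilon{\bf K})^n\,\Upsilon,$$ the series converging in operator norm with rate of convergence at most $|u|$.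
   Context: ${\cal H}$ is a complex Hilbert space, $\Gamma$ is an orthogonal projection on ${\cal H}$, and ${\bf A}:{\cal H}\to{\cal H}$ is bounded Hermitian with $0\le{\bf A}\le{\bf I}$. For a series $\sum_n\alpha^n{\bf C}_n$ the rate of convergence is $|\alpha|\limsup_n\|{\bf C}_n\|^{1/n}$. *)

theory Defs
  imports "HOL-Analysis.Analysis" "HOL-Library.Liminf_Limsup"
begin

text \<open>The inner product is linear in the first and conjugate-linear in the second argument.\<close>

class complex_hilbert = banach +
  fixes scaleC :: "complex \<Rightarrow> 'a \<Rightarrow> 'a"
    and cinner :: "'a \<Rightarrow> 'a \<Rightarrow> complex"
  assumes scaleC_of_real: "scaleC (complex_of_real r) x = scaleR r x"
    and scaleC_add_right: "scaleC a (x + y) = scaleC a x + scaleC a y"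
    and scaleC_add_left: "scaleC (a + b) x = scaleC a x + scaleC b x"
    and scaleC_scaleC: "scaleC a (scaleC b x) = scaleC (a * b) x"
    and cinner_add_left: "cinner (x + y) z = cinner x z + cinner y z"
    and cinner_scaleC_left: "cinner (scaleC a x) y = a * cinner x y"
    and cinner_commute: "cinner y x = cnj (cinner x y)"
    and cinner_norm: "cinner x x = complex_of_real ((norm x)\<^sup>2)"

text \<open>Bounded (complex-linear) operators on H are the complex-linear elements of the blinfun type;
 the norm of the blinfun type is the operator norm.\<close>

definition clinear_op :: "('a::complex_hilbert \<Rightarrow>\<^sub>L 'a) \<Rightarrow> bool" where
  "clinear_op T \<longleftrightarrow> (\<forall>c x. blinfun_apply T (scaleC c x) = scaleC c (blinfun_apply T x))"

definition hermitian_op :: "('a::complex_hilbert \<Rightarrow>\<^sub>L 'a) \<Rightarrow> bool" where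
  "hermitian_op T \<longleftrightarrow> clinear_op T \<and>
     (\<forall>x y. cinner (blinfun_apply T x) y = cinner x (blinfun_apply T y))"

definition orth_proj :: "('a::complex_hilbert \<Rightarrow>\<^sub>L 'a) \<Rightarrow> bool" where
  "orth_proj P \<longleftrightarrow> hermitian_op P \<and> P o\<^sub>L P = P"

definition cscale_op :: "complex \<Rightarrow> ('a::complex_hilbert \<Rightarrow>\<^sub>L 'a) \<Rightarrow> ('a \<Rightarrow>\<^sub>L 'a)" where
  "cscale_op c T = Blinfun (\<lambda>x. scaleC c (blinfun_apply T x))"

definition invertible_op :: "('a::complex_hilbert \<Rightarrow>\<^sub>L 'a) \<Rightarrow> bool" where
  "invertible_op T \<longleftrightarrow> (\<exists>S. clinear_op S \<and> S o\<^sub>L T = id_blinfun \<and> T o\<^sub>L S = id_blinfun)"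

definition inv_op :: "('a::complex_hilbert \<Rightarrow>\<^sub>L 'a) \<Rightarrow> ('a \<Rightarrow>\<^sub>L 'a)" where
  "inv_op T = (THE S. S o\<^sub>L T = id_blinfun \<and> T o\<^sub>L S = id_blinfun)"

definition opow :: "('a::real_normed_vector \<Rightarrow>\<^sub>L 'a) \<Rightarrow> nat \<Rightarrow> ('a \<Rightarrow>\<^sub>L 'a)" where
  "opow T n = ((\<lambda>S. T o\<^sub>L S) ^^ n) id_blinfun"

definition conv_rate :: "(nat \<Rightarrow> 'b::real_normed_vector) \<Rightarrow> ereal" where
  "conv_rate C = limsup (\<lambda>n. ereal (root n (norm (C n))))"

end

theory Submission
  imports Defs
begin


lemma scaleC_one[simp]: "scaleC 1 (x::'a::complex_hilbert) = x"
  using scaleC_of_real[of 1 x] by simp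
lemma scaleC_zero_right[simp]: "scaleC a 0 = 0"
  using scaleC_add_right[of a 0 0] by simp
lemma scaleC_minus_right: "scaleC a (- x) = - scaleC a x"
  using scaleC_add_right[of a x "-x"] by (simp add: eq_neg_iff_add_eq_0 add.commute)
lemma scaleC_diff_right: "scaleC a (x - y) = scaleC a x - scaleC a y"
  using scaleC_add_right[of a x "-y"] by (simp add: scaleC_minus_right)
lemma scaleC_scaleR_right: "scaleC a (scaleR r x) = scaleR r (scaleC a x)"
  by (metis scaleC_of_real scaleC_scaleC mult.commute)
lemma scaleC_real: "scaleR r x = scaleC (complex_of_real r) x"
  by (simp add: scaleC_of_real)
lemma cinner_add_right: "cinner z (x + y) = cinner z x + cinner z y"
  by (metis cinner_commute cinner_add_left complex_cnj_add)
lemma cinner_scaleC_right: "cinner x (scaleC a y) = cnj a * cinner x y"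
  by (metis cinner_commute cinner_scaleC_left complex_cnj_mult)
lemma cinner_zero_left[simp]: "cinner 0 y = 0"
  using cinner_add_left[of 0 0 y] by simp
lemma cinner_minus_left: "cinner (- x) y = - cinner x y"
  using cinner_add_left[of x "-x" y] by (simp add: eq_neg_iff_add_eq_0 add.commute)
lemma cinner_diff_left: "cinner (x - y) z = cinner x z - cinner y z"
  using cinner_add_left[of x "-y" z] by (simp add: cinner_minus_left)
lemma cinner_diff_right: "cinner z (x - y) = cinner z x - cinner z y"
  by (metis cinner_commute cinner_diff_left complex_cnj_diff)
lemma cinner_scaleR_left: "cinner (scaleR r x) y = of_real r * cinner x y"
  by (simp add: scaleC_real cinner_scaleC_left)
lemma cinner_scaleR_right: "cinner x (scaleR r y) = of_real r * cinner x y"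
  by (simp add: scaleC_real cinner_scaleC_right)
lemma norm_sq_cinner: "(norm x)^2 = Re (cinner x x)"
  by (simp add: cinner_norm)
lemma norm_scaleC: "norm (scaleC a x) = cmod a * norm x"
proof -
  have "(norm (scaleC a x))^2 = (cmod a * norm x)^2"
    unfolding norm_sq_cinner cinner_scaleC_left cinner_scaleC_right
    apply (simp add: cinner_norm power_mult_distrib complex_mult_cnj del: of_real_power)
    using cmod_power2[of a] by (simp add: power2_eq_square algebra_simps)
  thus ?thesis by (simp add: power2_eq_iff_nonneg)
qed
lemma bounded_linear_scaleC: "bounded_linear (scaleC a)"
  apply (rule bounded_linear_intro[where K="cmod a"])
  by (auto simp: scaleC_add_right scaleC_scaleR_right norm_scaleC)

lemma cscale_apply[simp]: "blinfun_apply (cscale_op c T) x = scaleC c (T x)"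
  unfolding cscale_op_def
  by (subst bounded_linear_Blinfun_apply)
     (auto intro: bounded_linear_compose[OF bounded_linear_scaleC blinfun.bounded_linear_right, unfolded o_def])



lemma clinear_op_id[simp]: "clinear_op id_blinfun" by (simp add: clinear_op_def)
lemma clinear_op_add: "clinear_op S \<Longrightarrow> clinear_op T \<Longrightarrow> clinear_op (S + T)"
  by (simp add: clinear_op_def blinfun.add_left scaleC_add_right)
lemma clinear_op_diff: "clinear_op S \<Longrightarrow> clinear_op T \<Longrightarrow> clinear_op (S - T)"
  by (simp add: clinear_op_def blinfun.diff_left scaleC_diff_right)
lemma clinear_op_minus: "clinear_op S \<Longrightarrow> clinear_op (- S)"
  by (simp add: clinear_op_def blinfun.minus_left scaleC_minus_right)
lemma clinear_op_scaleR: "clinear_op S \<Longrightarrow> clinear_op (r *\<^sub>R S)"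
  by (simp add: clinear_op_def scaleC_scaleR_right blinfun.scaleR_left)
lemma clinear_op_compose: "clinear_op S \<Longrightarrow> clinear_op T \<Longrightarrow> clinear_op (S o\<^sub>L T)"
  by (simp add: clinear_op_def)
lemma clinear_op_cscale: "clinear_op T \<Longrightarrow> clinear_op (cscale_op c T)"
  by (simp add: clinear_op_def scaleC_scaleC mult.commute)

lemma clinear_op_inverse:
  assumes "clinear_op T" "S o\<^sub>L T = id_blinfun" "T o\<^sub>L S = id_blinfun"
  shows "clinear_op S"
  unfolding clinear_op_def
proof (intro allI)
  fix c x
  have "S (scaleC c x) = S (scaleC c (T (S x)))"
    using assms(3) by (metis blinfun_apply_blinfun_compose blinfun_apply_id_blinfun id_apply)
  also have "\<dots> = S (T (scaleC c (S x)))" using assms(1) by (simp add: clinear_op_def)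
  also have "\<dots> = scaleC c (S x)"
    using assms(2) by (metis blinfun_apply_blinfun_compose blinfun_apply_id_blinfun id_apply)
  finally show "S (scaleC c x) = scaleC c (S x)" .
qed

lemma inv_op_eq:
  fixes T S :: "'a::complex_hilbert \<Rightarrow>\<^sub>L 'a"
  assumes "S o\<^sub>L T = id_blinfun" "T o\<^sub>L S = id_blinfun"
  shows "inv_op T = S"
  unfolding inv_op_def
proof (rule the_equality)
  show "S o\<^sub>L T = id_blinfun \<and> T o\<^sub>L S = id_blinfun" using assms by simp
  fix S' assume h: "S' o\<^sub>L T = id_blinfun \<and> T o\<^sub>L S' = id_blinfun"
  show "S' = S"
  proof (rule blinfun_eqI)
    fix x
    have "S' x = S' (T (S x))"
      using assms(2) by (metis blinfun_apply_blinfun_compose blinfun_apply_id_blinfun id_apply)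
    also have "\<dots> = S x" using h by (metis blinfun_apply_blinfun_compose blinfun_apply_id_blinfun id_apply)
    finally show "S' x = S x" .
  qed
qed

lemma invertible_opI:
  assumes "clinear_op T" "S o\<^sub>L T = id_blinfun" "T o\<^sub>L S = id_blinfun"
  shows "invertible_op T"
  unfolding invertible_op_def using assms clinear_op_inverse by blast

lemma opow_0[simp]: "opow T 0 = id_blinfun" by (simp add: opow_def)
lemma opow_Suc: "opow T (Suc n) = T o\<^sub>L opow T n" by (simp add: opow_def)
lemma opow_Suc': "opow T (Suc n) = opow T n o\<^sub>L T"
proof (induction n)
  case 0 then show ?case by (auto simp: opow_Suc intro: blinfun_eqI)
next
  case (Suc n)
  have "opow T (Suc (Suc n)) = T o\<^sub>L (opow T n o\<^sub>L T)" using Suc by (simp add: opow_Suc)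
  also have "\<dots> = opow T (Suc n) o\<^sub>L T" by (auto simp: opow_Suc intro: blinfun_eqI)
  finally show ?case .
qed
lemma norm_opow: "norm (opow T n) \<le> norm T ^ n"
proof (induction n)
  case 0 then show ?case by (simp add: norm_blinfun_id_le)
next
  case (Suc n)
  have "norm (opow T (Suc n)) \<le> norm T * norm (opow T n)" unfolding opow_Suc by (rule norm_blinfun_compose)
  also have "\<dots> \<le> norm T * norm T ^ n" using Suc by (simp add: mult_left_mono)
  finally show ?case by simp
qed

lemma neumann:
  fixes T :: "'a::banach \<Rightarrow>\<^sub>L 'a"
  assumes "norm T < 1"
  shows "summable (opow T)"
    "(id_blinfun - T) o\<^sub>L (\<Sum>n. opow T n) = id_blinfun"
    "(\<Sum>n. opow T n) o\<^sub>L (id_blinfun - T) = id_blinfun"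
proof -
  show s: "summable (opow T)"
    by (rule summable_comparison_test[OF _ summable_geometric[of "norm T"]])
       (use assms norm_opow in auto)
  have lim0: "opow T \<longlonglongrightarrow> 0"
  proof (rule tendsto_norm_zero_cancel, rule Lim_null_comparison)
    show "\<forall>\<^sub>F n in sequentially. norm (norm (opow T n)) \<le> norm T ^ n" by (simp add: always_eventually norm_opow)
    show "(\<lambda>n. norm T ^ n) \<longlonglongrightarrow> 0" using assms by (simp add: LIMSEQ_power_zero)
  qed
  have tel: "(\<lambda>n. opow T n - opow T (Suc n)) sums (id_blinfun - 0)"
    using telescope_sums'[OF lim0] by simp
  have bl1: "bounded_linear (\<lambda>X. (id_blinfun - T) o\<^sub>L X)"
    by (rule bounded_bilinear.bounded_linear_right[OF bounded_bilinear_blinfun_compose])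
  have bl2: "bounded_linear (\<lambda>X. X o\<^sub>L (id_blinfun - T))"
    by (rule bounded_bilinear.bounded_linear_left[OF bounded_bilinear_blinfun_compose])
  have e1: "\<And>n. (id_blinfun - T) o\<^sub>L opow T n = opow T n - opow T (Suc n)"
    by (auto simp: opow_Suc blinfun.bilinear_simps intro!: blinfun_eqI)
  have e2: "\<And>n. opow T n o\<^sub>L (id_blinfun - T) = opow T n - opow T (Suc n)"
    by (auto simp: opow_Suc' blinfun.bilinear_simps intro!: blinfun_eqI)
  show "(id_blinfun - T) o\<^sub>L (\<Sum>n. opow T n) = id_blinfun"
    using bounded_linear.suminf[OF bl1 s] tel e1 by (simp add: sums_iff)
  show "(\<Sum>n. opow T n) o\<^sub>L (id_blinfun - T) = id_blinfun"
    using bounded_linear.suminf[OF bl2 s] tel e2 by (simp add: sums_iff)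
qed



lemma herm_real:
  assumes "hermitian_op A"
  shows "cinner (A x) x = of_real (Re (cinner (A x) x))"
    "cinner x (A x) = of_real (Re (cinner (A x) x))"
proof -
  have e: "cinner x (A x) = cinner (A x) x" using assms by (simp add: hermitian_op_def)
  have c: "cinner x (A x) = cnj (cinner (A x) x)" by (rule cinner_commute)
  have "Im (cinner (A x) x) = Im (cnj (cinner (A x) x))" using e c by simp
  hence "Im (cinner (A x) x) = - Im (cinner (A x) x)" by simp
  hence "Im (cinner (A x) x) = 0" by simp
  thus "cinner (A x) x = of_real (Re (cinner (A x) x))" by (simp add: complex_eq_iff)
  thus "cinner x (A x) = of_real (Re (cinner (A x) x))" using e by metis
qed

lemma quad:
  assumes "hermitian_op A"
  shows "(norm (scaleC p x + scaleC q (A x)))^2 =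
     (cmod p)^2 * ((norm x)^2 - Re (cinner (A x) x)) + (cmod (p+q))^2 * Re (cinner (A x) x)
     + (cmod q)^2 * ((norm (A x))^2 - Re (cinner (A x) x))"
proof -
  define a where "a = Re (cinner (A x) x)"
  have h1: "cinner (A x) x = of_real a" "cinner x (A x) = of_real a"
    unfolding a_def by (rule herm_real[OF assms])+
  have h2: "cinner x x = of_real ((norm x)^2)" "cinner (A x) (A x) = of_real ((norm (A x))^2)"
    by (simp_all add: cinner_norm)
  have "(norm (scaleC p x + scaleC q (A x)))^2 =
     Re (p * cnj p * of_real ((norm x)^2) + p * cnj q * of_real a + q * cnj p * of_real a
         + q * cnj q * of_real ((norm (A x))^2))"
    unfolding norm_sq_cinner[of "scaleC p x + scaleC q (A x)"] cinner_add_left cinner_add_right cinner_scaleC_left cinner_scaleC_right h1 h2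
    by (simp add: algebra_simps)
  also have "\<dots> = (cmod p)^2 * ((norm x)^2 - a) + (cmod (p+q))^2 * a + (cmod q)^2 * ((norm (A x))^2 - a)"
    using cmod_power2[of p] cmod_power2[of q] cmod_power2[of "p+q"] by (simp add: power2_eq_square algebra_simps)
  finally show ?thesis by (simp add: a_def)
qed

lemma b_le_a:
  assumes hA: "hermitian_op A"
    and A_pos: "\<forall>x. 0 \<le> Re (cinner (blinfun_apply A x) x)"
    and A_le: "\<forall>x. Re (cinner (blinfun_apply A x) x) \<le> Re (cinner x x)"
  shows "(norm (A x))^2 \<le> Re (cinner (A x) x)"
proof -
  have s: "cinner (A (A x)) x = cinner (A x) (A x)" using hA by (simp add: hermitian_op_def)
  have "0 \<le> Re (cinner (A (x - A x)) (x - A x))" using A_pos by blast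
  also have "\<dots> = Re (cinner (A x) x) - 2 * Re (cinner (A x) (A x)) + Re (cinner (A (A x)) (A x))"
    by (simp add: blinfun.diff_right cinner_diff_left cinner_diff_right s)
  also have "Re (cinner (A (A x)) (A x)) \<le> Re (cinner (A x) (A x))" using A_le by blast
  finally show ?thesis by (simp add: norm_sq_cinner)
qed

lemma A_le_norm:
  assumes "\<forall>x. Re (cinner (blinfun_apply A x) x) \<le> Re (cinner x x)"
  shows "Re (cinner (A x) x) \<le> (norm x)^2"
  using assms by (simp add: norm_sq_cinner)



lemma Re_csqrt_pos: "Re \<sigma> > 0 \<Longrightarrow> Re (csqrt \<sigma>) > 0"
proof -
  assume h: "Re \<sigma> > 0"
  have "Re \<sigma> = Re ((csqrt \<sigma>)\<^sup>2)" by (simp only: power2_csqrt)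
  also have "\<dots> = (Re (csqrt \<sigma>))\<^sup>2 - (Im (csqrt \<sigma>))\<^sup>2" by (rule Re_power2)
  finally have e: "Re \<sigma> = (Re (csqrt \<sigma>))\<^sup>2 - (Im (csqrt \<sigma>))\<^sup>2" .
  show ?thesis
  proof (rule ccontr)
    assume "\<not> Re (csqrt \<sigma>) > 0"
    hence "Re (csqrt \<sigma>) = 0" using Re_csqrt[of \<sigma>] by linarith
    hence "(Re (csqrt \<sigma>))\<^sup>2 = 0" by (simp only: power_zero_numeral)
    thus False using e h zero_le_power2[of "Im (csqrt \<sigma>)"] by linarith
  qed
qed

lemma u_lt1: assumes "Re c > 0" shows "cmod ((c - 1) / (c + 1)) < 1"
proof -
  have "(cmod (c - 1))^2 < (cmod (c + 1))^2"
    using assms unfolding cmod_power2 by (simp add: power2_eq_square algebra_simps)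
  hence "cmod (c - 1) < cmod (c + 1)" by (simp add: power2_less_imp_less)
  moreover have "cmod (c + 1) > 0" using assms by (auto simp: complex_eq_iff)
  ultimately show ?thesis by (simp add: norm_divide)
qed

lemma disk: assumes "Re w > 0" "R > (cmod w)^2 / Re w" shows "cmod (complex_of_real R - w) < R"
proof -
  have R0: "R > 0" using assms by (smt (verit) divide_nonneg_pos zero_le_power2)
  have "(cmod w)^2 < R * Re w" using assms by (simp add: pos_divide_less_eq)
  moreover have "(cmod (complex_of_real R - w))^2 = R^2 - 2*R*Re w + (cmod w)^2"
    unfolding cmod_power2 by (simp add: power2_eq_square algebra_simps)
  moreover have "0 < R * Re w" using assms R0 by simp
  ultimately have "(cmod (complex_of_real R - w))^2 < R^2" by linarith
  thus ?thesis using R0 by (simp add: power2_less_imp_less)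
qed

lemma scaleC_zero_left[simp]: "scaleC 0 (x::'a::complex_hilbert) = 0"
  using scaleC_of_real[of 0 x] by simp
lemma scaleC_minus_left: "scaleC (- a) (x::'a::complex_hilbert) = - scaleC a x"
  using scaleC_add_left[of a "-a" x] by (simp add: eq_neg_iff_add_eq_0 add.commute)
lemma scaleC_diff_left: "scaleC (a - b) (x::'a::complex_hilbert) = scaleC a x - scaleC b x"
  using scaleC_add_left[of a "-b" x] by (simp add: scaleC_minus_left)



lemma quad_bound:
  fixes A :: "'a::complex_hilbert \<Rightarrow>\<^sub>L 'a"
  assumes hA: "hermitian_op A"
    and A_pos: "\<forall>x. 0 \<le> Re (cinner (blinfun_apply A x) x)"
    and A_le: "\<forall>x. Re (cinner (blinfun_apply A x) x) \<le> Re (cinner x x)"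
    and m: "cmod p \<le> m" "cmod (p + q) \<le> m"
  shows "norm (scaleC p x + scaleC q (A x)) \<le> m * norm x"
proof -
  define a where "a = Re (cinner (A x) x)"
  have a0: "0 \<le> a" using A_pos a_def by blast
  have a1: "a \<le> (norm x)^2" using A_le_norm[OF A_le] a_def by blast
  have b: "(norm (A x))^2 \<le> a" using b_le_a[OF hA A_pos A_le] a_def by blast
  have m0: "0 \<le> m" using m(1) norm_ge_zero order_trans by blast
  have "(norm (scaleC p x + scaleC q (A x)))^2 =
     (cmod p)^2 * ((norm x)^2 - a) + (cmod (p+q))^2 * a + (cmod q)^2 * ((norm (A x))^2 - a)"
    unfolding a_def by (rule quad[OF hA])
  also have "\<dots> \<le> m^2 * ((norm x)^2 - a) + m^2 * a + 0"
  proof -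
    have "(cmod p)^2 \<le> m^2" by (rule power_mono[OF m(1)]) auto
    hence 1: "(cmod p)^2 * ((norm x)^2 - a) \<le> m^2 * ((norm x)^2 - a)" using a1 by (auto intro!: mult_right_mono)
    have "(cmod (p+q))^2 \<le> m^2" by (rule power_mono[OF m(2)]) auto
    hence 2: "(cmod (p+q))^2 * a \<le> m^2 * a" using a0 by (auto intro!: mult_right_mono)
    have 3: "(cmod q)^2 * ((norm (A x))^2 - a) \<le> 0" using b by (auto intro!: mult_nonneg_nonpos)
    show ?thesis using 1 2 3 by linarith
  qed
  also have "\<dots> = (m * norm x)^2" by (simp add: algebra_simps power_mult_distrib)
  finally show ?thesis by (rule power2_le_imp_le) (use m0 in auto)
qed

lemma K_ineq:
  fixes A :: "'a::complex_hilbert \<Rightarrow>\<^sub>L 'a"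
  assumes hA: "hermitian_op A"
    and A_pos: "\<forall>x. 0 \<le> Re (cinner (blinfun_apply A x) x)"
    and A_le: "\<forall>x. Re (cinner (blinfun_apply A x) x) \<le> Re (cinner x x)"
    and U: "U \<le> 1" "0 \<le> U"
    and e1: "(cmod p1)^2 = U * (cmod p2)^2" and e2: "(cmod (p1 + q))^2 = U * (cmod (p2 + q))^2"
  shows "(norm (scaleC p1 x + scaleC q (A x)))^2 \<le> U * (norm (scaleC p2 x + scaleC q (A x)))^2"
proof -
  define a where "a = Re (cinner (A x) x)"
  have b: "(norm (A x))^2 \<le> a" using b_le_a[OF hA A_pos A_le] a_def by blast
  define Y where "Y = (cmod p2)^2 * ((norm x)^2 - a) + (cmod (p2+q))^2 * a"
  define Z where "Z = (cmod q)^2 * ((norm (A x))^2 - a)"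
  have q1: "(norm (scaleC p1 x + scaleC q (A x)))^2 = U * Y + Z"
    unfolding quad[OF hA] a_def[symmetric] Y_def Z_def e1 e2 by (simp add: algebra_simps)
  have q2: "(norm (scaleC p2 x + scaleC q (A x)))^2 = Y + Z"
    unfolding quad[OF hA] a_def[symmetric] Y_def Z_def by (simp add: algebra_simps)
  have z: "Z \<le> 0" unfolding Z_def using b by (auto intro!: mult_nonneg_nonpos)
  have "0 \<le> 1 - U" using U by simp
  hence "(1 - U) * Z \<le> 0" using z by (rule mult_nonneg_nonpos)
  hence "Z \<le> U * Z" by (simp add: algebra_simps)
  thus ?thesis unfolding q1 q2 by (simp add: algebra_simps)
qed



theorem mainTheorem7:
  fixes A \<Gamma> :: "'a::complex_hilbert \<Rightarrow>\<^sub>L 'a" and \<sigma> c u :: complex and L K \<Upsilon> :: "'a \<Rightarrow>\<^sub>L 'a"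
  assumes hA: "hermitian_op A"
    and A_pos: "\<forall>x. 0 \<le> Re (cinner (blinfun_apply A x) x)"
    and A_le: "\<forall>x. Re (cinner (blinfun_apply A x) x) \<le> Re (cinner x x)"
    and hG: "orth_proj \<Gamma>"
    and hs: "Re \<sigma> > 0"
  assumes L_def: "L = id_blinfun + cscale_op (\<sigma> - 1) A"
    and c_def: "c = csqrt \<sigma>"
    and u_def: "u = (csqrt \<sigma> - 1) / (csqrt \<sigma> + 1)"
    and K_def: "K = (L - cscale_op c id_blinfun) o\<^sub>L inv_op (L + cscale_op c id_blinfun)"
    and Y_def: "\<Upsilon> = id_blinfun - 2 *\<^sub>R \<Gamma>"
  shows "invertible_op (L + cscale_op c id_blinfun)
    \<and> norm u < 1
    \<and> norm K \<le> norm u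
    \<and> norm (\<Upsilon> o\<^sub>L K) \<le> norm u
    \<and> invertible_op (- cscale_op c id_blinfun + (\<Gamma> o\<^sub>L (L + cscale_op c id_blinfun)))
    \<and> summable (\<lambda>n. (- 2 *\<^sub>R inv_op (L + cscale_op c id_blinfun)) o\<^sub>L opow (\<Upsilon> o\<^sub>L K) n o\<^sub>L \<Upsilon>)
    \<and> inv_op (- cscale_op c id_blinfun + (\<Gamma> o\<^sub>L (L + cscale_op c id_blinfun)))
        = (- 2 *\<^sub>R inv_op (L + cscale_op c id_blinfun))
            o\<^sub>L (\<Sum>n. opow (\<Upsilon> o\<^sub>L K) n) o\<^sub>L \<Upsilon>
    \<and> conv_rate (\<lambda>n. (- 2 *\<^sub>R inv_op (L + cscale_op c id_blinfun)) o\<^sub>L opow (\<Upsilon> o\<^sub>L K) n o\<^sub>L \<Upsilon>)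
        \<le> ereal (norm u)"
proof -
  define s where "s = \<sigma> - 1"
  define T0 where "T0 = L + cscale_op c id_blinfun"
  have cRe: "Re c > 0" using Re_csqrt_pos[OF hs] c_def by simp
  have csq: "c * c = \<sigma>" unfolding c_def by (simp flip: power2_eq_square)
  have c1: "c + 1 \<noteq> 0" using cRe by (auto simp: complex_eq_iff)
  have u_c: "u = (c - 1) / (c + 1)" using u_def c_def by simp
  have ult: "cmod u < 1" using u_lt1[OF cRe] u_c by simp
  have uc1: "u * (c + 1) = c - 1" using c1 u_c by simp
  have nu1: "cmod (1 - c) = cmod u * cmod (1 + c)"
  proof -
    have "cmod (1 - c) = cmod (u * (c + 1))" using uc1 by (simp add: norm_minus_commute)
    thus ?thesis by (simp add: norm_mult add.commute)
  qed
  have nu2: "cmod (\<sigma> - c) = cmod u * cmod (\<sigma> + c)"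
  proof -
    have "\<sigma> - c = c * (c - 1)" using csq by (simp add: algebra_simps)
    hence "\<sigma> - c = c * (u * (c + 1))" using uc1 by simp
    moreover have "\<sigma> + c = c * (c + 1)" using csq by (simp add: algebra_simps)
    ultimately show ?thesis by (simp add: norm_mult)
  qed
  have hAc: "clinear_op A" using hA by (simp add: hermitian_op_def)
  have hGh: "hermitian_op \<Gamma>" and GG0: "\<Gamma> o\<^sub>L \<Gamma> = \<Gamma>" using hG by (auto simp: orth_proj_def)
  have hGc: "clinear_op \<Gamma>" using hGh by (simp add: hermitian_op_def)
  have Lx: "\<And>x. L x = x + scaleC s (A x)" by (simp add: L_def s_def blinfun.add_left)
  have T0x: "\<And>x. T0 x = scaleC (1 + c) x + scaleC s (A x)"
    by (simp add: T0_def Lx blinfun.add_left scaleC_add_left algebra_simps)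
  have LCx: "\<And>x. (L - cscale_op c id_blinfun) x = scaleC (1 - c) x + scaleC s (A x)"
    by (simp add: Lx blinfun.diff_left scaleC_diff_left algebra_simps)
  have Lc: "clinear_op L" unfolding L_def by (intro clinear_op_add clinear_op_cscale clinear_op_id hAc)
  have T0c: "clinear_op T0" unfolding T0_def by (intro clinear_op_add clinear_op_cscale clinear_op_id Lc)
  have Re1: "Re (1 + c) > 0" using cRe by simp
  have Re2: "Re (\<sigma> + c) > 0" using cRe hs by simp
  define R where "R = (cmod (1+c))^2 / Re (1+c) + (cmod (\<sigma>+c))^2 / Re (\<sigma>+c) + 1"
  have R1: "cmod (of_real R - (1+c)) < R"
    by (rule disk[OF Re1]) (unfold R_def, smt (verit) Re2 divide_nonneg_pos zero_le_power2)
  have R2: "cmod (of_real R - (\<sigma>+c)) < R"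
    by (rule disk[OF Re2]) (unfold R_def, smt (verit) Re1 divide_nonneg_pos zero_le_power2)
  have R0: "R > 0" using R1 norm_ge_zero[of "of_real R - (1+c)"] by linarith
  define p where "p = 1 - (1+c) / of_real R"
  define q where "q = - (s / of_real R)"
  have pq: "p + q = 1 - (\<sigma> + c) / of_real R" unfolding p_def q_def s_def using R0 by (simp add: field_simps)
  have np: "cmod p < 1"
  proof -
    have "p = (of_real R - (1+c)) / of_real R" unfolding p_def using R0 by (simp add: field_simps)
    thus ?thesis using R1 R0 by (simp add: norm_divide)
  qed
  have npq: "cmod (p + q) < 1"
  proof -
    have "p + q = (of_real R - (\<sigma>+c)) / of_real R" unfolding pq using R0 by (simp add: field_simps)
    thus ?thesis using R2 R0 by (simp add: norm_divide)
  qed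
  define N where "N = id_blinfun - (1/R) *\<^sub>R T0"
  have Nx: "\<And>x. N x = scaleC p x + scaleC q (A x)"
  proof -
    fix x
    have "N x = x - scaleC (of_real (1/R)) (T0 x)" by (simp add: N_def blinfun.diff_left blinfun.scaleR_left scaleC_real)
    also have "\<dots> = x - (scaleC ((1+c) / of_real R) x + scaleC (s / of_real R) (A x))"
      by (simp add: T0x scaleC_add_right scaleC_scaleC divide_inverse mult.commute)
    also have "\<dots> = scaleC p x + scaleC q (A x)"
      by (simp add: p_def q_def scaleC_diff_left scaleC_minus_left)
    finally show "N x = scaleC p x + scaleC q (A x)" .
  qed
  have nN: "norm N < 1"
  proof -
    have "norm N \<le> max (cmod p) (cmod (p+q))"
    proof (rule norm_blinfun_bound)
      fix x show "norm (N x) \<le> max (cmod p) (cmod (p+q)) * norm x"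
        unfolding Nx by (rule quad_bound[OF hA A_pos A_le]) auto
    qed (meson norm_ge_zero max.coboundedI1)
    thus ?thesis using np npq by linarith
  qed
  define S where "S = (\<Sum>n. opow N n)"
  have n2: "(id_blinfun - N) o\<^sub>L S = id_blinfun" and n3: "S o\<^sub>L (id_blinfun - N) = id_blinfun"
    using neumann[OF nN] by (simp_all add: S_def)
  define V where "V = (1/R) *\<^sub>R S"
  have idN: "\<And>x. (id_blinfun - N) x = (1/R) *\<^sub>R T0 x"
    by (simp add: N_def blinfun.diff_left blinfun.scaleR_left)
  have VT0x: "\<And>x. V (T0 x) = x"
  proof -
    fix x
    have "V (T0 x) = S ((1/R) *\<^sub>R T0 x)" by (simp add: V_def blinfun.scaleR_left blinfun.scaleR_right)
    also have "\<dots> = S ((id_blinfun - N) x)" by (simp add: idN)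
    also have "\<dots> = x" using n3 by (metis blinfun_apply_blinfun_compose blinfun_apply_id_blinfun id_apply)
    finally show "V (T0 x) = x" .
  qed
  have T0Vx: "\<And>x. T0 (V x) = x"
  proof -
    fix x
    have "T0 (V x) = (1/R) *\<^sub>R T0 (S x)" by (simp add: V_def blinfun.scaleR_left blinfun.scaleR_right)
    also have "\<dots> = (id_blinfun - N) (S x)" by (simp add: idN)
    also have "\<dots> = x" using n2 by (metis blinfun_apply_blinfun_compose blinfun_apply_id_blinfun id_apply)
    finally show "T0 (V x) = x" .
  qed
  have VT0: "V o\<^sub>L T0 = id_blinfun" by (rule blinfun_eqI) (simp add: VT0x)
  have T0V: "T0 o\<^sub>L V = id_blinfun" by (rule blinfun_eqI) (simp add: T0Vx)
  have invT0: "inv_op T0 = V" by (rule inv_op_eq[OF VT0 T0V])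
  have invertT0: "invertible_op T0" by (rule invertible_opI[OF T0c VT0 T0V])
  have Kx: "\<And>y. K y = (L - cscale_op c id_blinfun) (V y)"
    by (simp add: K_def T0_def[symmetric] invT0)
  have LCineq: "\<And>x. norm ((L - cscale_op c id_blinfun) x) \<le> cmod u * norm (T0 x)"
  proof -
    fix x
    have "(norm (scaleC (1 - c) x + scaleC s (A x)))^2 \<le> (cmod u)^2 * (norm (scaleC (1 + c) x + scaleC s (A x)))^2"
    proof (rule K_ineq[OF hA A_pos A_le])
      show "(cmod u)^2 \<le> 1" using ult by (simp add: power_le_one)
      show "(cmod (1 - c))^2 = (cmod u)^2 * (cmod (1 + c))^2" by (simp add: nu1 power_mult_distrib)
      have e: "1 - c + s = \<sigma> - c" "1 + c + s = \<sigma> + c" by (simp_all add: s_def)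
      show "(cmod (1 - c + s))^2 = (cmod u)^2 * (cmod (1 + c + s))^2" unfolding e nu2 by (simp add: power_mult_distrib)
    qed simp
    hence "(norm (scaleC (1 - c) x + scaleC s (A x)))^2 \<le> (cmod u * norm (scaleC (1 + c) x + scaleC s (A x)))^2"
      by (simp add: power_mult_distrib)
    hence "norm (scaleC (1 - c) x + scaleC s (A x)) \<le> cmod u * norm (scaleC (1 + c) x + scaleC s (A x))"
      by (rule power2_le_imp_le) simp
    thus "norm ((L - cscale_op c id_blinfun) x) \<le> cmod u * norm (T0 x)" by (simp add: LCx T0x)
  qed
  have nK: "norm K \<le> cmod u"
  proof (rule norm_blinfun_bound)
    fix y
    show "norm (K y) \<le> cmod u * norm y" using LCineq[of "V y"] by (simp add: Kx T0Vx)
  qed simp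
  have Yx: "\<And>x. \<Upsilon> x = x - 2 *\<^sub>R \<Gamma> x" by (simp add: Y_def blinfun.diff_left blinfun.scaleR_left)
  have GGx: "\<And>x. \<Gamma> (\<Gamma> x) = \<Gamma> x" using GG0 by (metis blinfun_apply_blinfun_compose)
  have YYx: "\<And>x. \<Upsilon> (\<Upsilon> x) = x"
    apply (simp add: Yx blinfun.diff_right blinfun.scaleR_right GGx algebra_simps)
    by (metis scaleR_add_left numeral_Bit0)
  have nYx: "\<And>x. norm (\<Upsilon> x) = norm x"
  proof -
    fix x
    have h1: "cinner x (\<Gamma> x) = cinner (\<Gamma> x) x" using hGh by (simp add: hermitian_op_def)
    have h2: "cinner (\<Gamma> x) (\<Gamma> x) = cinner (\<Gamma> x) x" using hGh GGx by (metis hermitian_op_def)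
    have "(norm (\<Upsilon> x))^2 = Re (cinner (\<Upsilon> x) (\<Upsilon> x))" by (rule norm_sq_cinner)
    also have "\<dots> = Re (cinner x x)"
      unfolding Yx cinner_diff_left cinner_diff_right cinner_scaleR_left
        cinner_scaleR_right h1 h2 by simp
    finally have "(norm (\<Upsilon> x))^2 = (norm x)^2" by (simp add: norm_sq_cinner)
    thus "norm (\<Upsilon> x) = norm x" by (simp add: power2_eq_iff_nonneg)
  qed
  have nY: "norm \<Upsilon> \<le> 1" by (rule norm_blinfun_bound) (simp_all add: nYx)
  define Z where "Z = \<Upsilon> o\<^sub>L K"
  have nZ: "norm Z \<le> cmod u"
  proof -
    have "norm Z \<le> norm \<Upsilon> * norm K" unfolding Z_def by (rule norm_blinfun_compose)
    also have "\<dots> \<le> 1 * cmod u" using nY nK by (intro mult_mono) auto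
    finally show ?thesis by simp
  qed
  have nZ1: "norm Z < 1" using nZ ult by linarith
  define S2 where "S2 = (\<Sum>n. opow Z n)"
  have m2: "(id_blinfun - Z) o\<^sub>L S2 = id_blinfun" and m3: "S2 o\<^sub>L (id_blinfun - Z) = id_blinfun"
    using neumann[OF nZ1] by (simp_all add: S2_def)
  have b1: "\<And>v. S2 ((id_blinfun - Z) v) = v" using m3 by (metis blinfun_apply_blinfun_compose blinfun_apply_id_blinfun id_apply)
  have b2: "\<And>v. (id_blinfun - Z) (S2 v) = v" using m2 by (metis blinfun_apply_blinfun_compose blinfun_apply_id_blinfun id_apply)
  define M where "M = - cscale_op c id_blinfun + (\<Gamma> o\<^sub>L T0)"
  have Mx: "\<And>x. M x = - scaleC c x + \<Gamma> (T0 x)" by (simp add: M_def blinfun.add_left blinfun.minus_left blinfun.diff_left)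
  have T0L: "\<And>x. T0 x = L x + scaleC c x" by (simp add: T0_def blinfun.add_left)
  have M2: "\<And>x. 2 *\<^sub>R M x = K (T0 x) - \<Upsilon> (T0 x)"
  proof -
    fix x
    have "K (T0 x) = L x - scaleC c x" by (simp add: Kx VT0x blinfun.diff_left)
    thus "2 *\<^sub>R M x = K (T0 x) - \<Upsilon> (T0 x)"
      unfolding Mx Yx by (simp add: T0L algebra_simps scaleR_2)
  qed
  define W where "W = (- 2 *\<^sub>R V) o\<^sub>L S2 o\<^sub>L \<Upsilon>"
  have Wy: "\<And>y. W y = - 2 *\<^sub>R V (S2 (\<Upsilon> y))" by (simp add: W_def blinfun.scaleR_left blinfun.minus_left)
  have WMx: "\<And>x. W (M x) = x"
  proof -
    fix x
    have a: "\<Upsilon> (2 *\<^sub>R M x) = - ((id_blinfun - Z) (T0 x))"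
      by (simp add: M2 blinfun.diff_right YYx Z_def blinfun.diff_left)
    have "2 *\<^sub>R S2 (\<Upsilon> (M x)) = S2 (\<Upsilon> (2 *\<^sub>R M x))" by (simp add: blinfun.scaleR_right)
    also have "\<dots> = - T0 x" by (simp add: a blinfun.minus_right b1)
    finally have c: "2 *\<^sub>R S2 (\<Upsilon> (M x)) = - T0 x" .
    have "W (M x) = - V (2 *\<^sub>R S2 (\<Upsilon> (M x)))" by (simp add: Wy blinfun.scaleR_right)
    also have "\<dots> = x" by (simp add: c blinfun.minus_right VT0x)
    finally show "W (M x) = x" .
  qed
  have MWy: "\<And>y. M (W y) = y"
  proof -
    fix y
    define w where "w = S2 (\<Upsilon> y)"
    have "M (W y) = - (2 *\<^sub>R M (V w))" by (simp add: Wy w_def blinfun.scaleR_right blinfun.minus_right)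
    also have "\<dots> = - (K w - \<Upsilon> w)" by (simp add: M2 T0Vx)
    also have "\<dots> = \<Upsilon> (w - \<Upsilon> (K w))" by (simp add: blinfun.diff_right YYx)
    also have "w - \<Upsilon> (K w) = \<Upsilon> y" using b2[of "\<Upsilon> y"] by (simp add: w_def Z_def blinfun.diff_left)
    finally show "M (W y) = y" by (simp add: YYx)
  qed
  have WM: "W o\<^sub>L M = id_blinfun" by (rule blinfun_eqI) (simp add: WMx)
  have MW: "M o\<^sub>L W = id_blinfun" by (rule blinfun_eqI) (simp add: MWy)
  have Mc: "clinear_op M" unfolding M_def
    by (intro clinear_op_add clinear_op_minus clinear_op_cscale clinear_op_id clinear_op_compose hGc T0c)
  have invM: "inv_op M = W" by (rule inv_op_eq[OF WM MW])
  have invertM: "invertible_op M" by (rule invertible_opI[OF Mc WM MW])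
  define B where "B = - 2 *\<^sub>R V"
  define C where "C = (\<lambda>n. B o\<^sub>L opow Z n o\<^sub>L \<Upsilon>)"
  have nC: "\<And>n. norm (C n) \<le> norm B * cmod u ^ n"
  proof -
    fix n
    have "norm (C n) \<le> norm (B o\<^sub>L opow Z n) * norm \<Upsilon>" unfolding C_def by (rule norm_blinfun_compose)
    also have "\<dots> \<le> norm (B o\<^sub>L opow Z n) * 1" using nY by (intro mult_left_mono) auto
    also have "\<dots> \<le> norm B * norm (opow Z n)" using norm_blinfun_compose by simp
    also have "\<dots> \<le> norm B * cmod u ^ n"
    proof (rule mult_left_mono)
      have "norm (opow Z n) \<le> norm Z ^ n" by (rule norm_opow)
      also have "\<dots> \<le> cmod u ^ n" using nZ by (intro power_mono) auto
      finally show "norm (opow Z n) \<le> cmod u ^ n" .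
    qed simp
    finally show "norm (C n) \<le> norm B * cmod u ^ n" .
  qed
  have sumC: "summable C"
  proof (rule summable_comparison_test)
    show "\<exists>N. \<forall>n\<ge>N. norm (C n) \<le> norm B * cmod u ^ n" using nC by blast
    show "summable (\<lambda>n. norm B * cmod u ^ n)" using ult by (intro summable_mult summable_geometric) simp
  qed
  have rate: "conv_rate C \<le> ereal (cmod u)"
  proof -
    define D where "D = norm B + 1"
    have D0: "D > 0" unfolding D_def by (simp add: add_nonneg_pos)
    have ev: "\<forall>\<^sub>F n in sequentially. ereal (root n (norm (C n))) \<le> ereal (root n D * cmod u)"
      using eventually_gt_at_top[of 0]
    proof eventually_elim
      case (elim n)
      have "norm (C n) \<le> D * cmod u ^ n"
        using nC[of n] unfolding D_def by (smt (verit) mult_right_mono zero_le_power norm_ge_zero)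
      hence "root n (norm (C n)) \<le> root n (D * cmod u ^ n)" using elim by (rule real_root_le_mono[rotated])
      also have "\<dots> = root n D * cmod u"
        using elim by (simp add: real_root_mult real_root_power_cancel)
      finally show ?case by simp
    qed
    have lim: "(\<lambda>n. ereal (root n D * cmod u)) \<longlonglongrightarrow> ereal (cmod u)"
      unfolding lim_ereal using tendsto_mult[OF LIMSEQ_root_const[OF D0] tendsto_const[of "cmod u"]] by simp
    have "conv_rate C \<le> limsup (\<lambda>n. ereal (root n D * cmod u))"
      unfolding conv_rate_def by (rule Limsup_mono[OF ev])
    also have "\<dots> = ereal (cmod u)" by (rule lim_imp_Limsup[OF trivial_limit_sequentially lim])
    finally show ?thesis .
  qed
  have Y1: "norm (\<Upsilon> o\<^sub>L K) \<le> norm u" using nZ Z_def by simp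
  show ?thesis
    unfolding T0_def[symmetric] M_def[symmetric] invT0 invM
    using invertT0 ult nK Y1 invertM sumC rate
    by (simp add: W_def C_def B_def S2_def Z_def)
qed

end
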